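(* Let $(X,|\cdot|_X)$ be a Banach space, $T>0$, and let $A\colon D(A)\subset X\to X$ be the infinitesimal generator of a $C_0$-semigroup $\{S(t): t\ge 0\}$ of bounded linear operators on $X$. Let $a,b,k>0$ and let $F,G\colon X^2\to X$ be continuous. Define $N_1,N_2\colon C([0,T];X)^2\to C([0,T];X)$ by \begin{align*} N_1(x,y)(t) &= \frac{1}{a}S(t)\Big[S(T)x(0)-kS(T)y(0)+kb\,y(0) + \int_0^T S(T-s)\big(F(x(s),y(s))-kG(x(s),y(s))\big)\,ds\Big] \\ &\quad+\int_0^t S(t-s)F(x(s),y(s))\,ds,\\ N_2(x,y)(t) &= \frac{1}{kb}S(t)\Big[-S(T)x(0)+kS(T)y(0)+a\,x(0) - \int_0^T S(T-s)\big(F(x(s),y(s))-kG(x(s),y(s))\big)\,ds\Big] \\ &\quad+\int_0^t S(t-s)G(x(s),y(s))\,ds, \end{align*} for $t\in[0,T]$. If $(x,y)\in C([0,T];X)^2$ satisfies $x=N_1(x,y)$ and $y=N_2(x,y)$, then for all $t\in[0,T]$ \[ x(t)=S(t)x(0)+\int_0^t S(t-s)F(x(s),y(s))\,ds,\qquad y(t)=S(t)y(0)+\int_0^t S(t-s)G(x(s),y(s))\,ds, \] and moreover $x(T)-a\,x(0)=k\big(y(T)-b\,y(0)\big)$.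
   Context: Integrals are Bochner/Riemann integrals of continuous $X$-valued functions. The two integral equations say that $x,y$ form a mild solution of the system $x'=Ax+F(x,y)$, $y'=Ay+G(x,y)$ on $[0,T]$. *)

theory Defs
  imports "HOL-Analysis.Analysis"
begin

definition C0_semigroup :: "(real \<Rightarrow> ('a::banach \<Rightarrow>\<^sub>L 'a)) \<Rightarrow> bool" where
  "C0_semigroup S \<longleftrightarrow>
     S 0 = id_blinfun \<and>
     (\<forall>t\<ge>0. \<forall>s\<ge>0. S (t + s) = S t o\<^sub>L S s) \<and>
     (\<forall>x. ((\<lambda>t. blinfun_apply (S t) x) \<longlongrightarrow> x) (at_right 0))"

definition sg_generator ::
  "(real \<Rightarrow> ('a::banach \<Rightarrow>\<^sub>L 'a)) \<Rightarrow> ('a \<Rightarrow> 'a) \<Rightarrow> 'a set \<Rightarrow> bool" where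
  "sg_generator S A D \<longleftrightarrow>
     D = {x. \<exists>l. ((\<lambda>h. (1 / h) *\<^sub>R (blinfun_apply (S h) x - x)) \<longlongrightarrow> l) (at_right 0)} \<and>
     (\<forall>x\<in>D. ((\<lambda>h. (1 / h) *\<^sub>R (blinfun_apply (S h) x - x)) \<longlongrightarrow> A x) (at_right 0))"

definition N1 ::
  "(real \<Rightarrow> ('a::banach \<Rightarrow>\<^sub>L 'a)) \<Rightarrow> ('a \<times> 'a \<Rightarrow> 'a) \<Rightarrow> ('a \<times> 'a \<Rightarrow> 'a) \<Rightarrow>
   real \<Rightarrow> real \<Rightarrow> real \<Rightarrow> real \<Rightarrow> (real \<Rightarrow> 'a) \<Rightarrow> (real \<Rightarrow> 'a) \<Rightarrow> real \<Rightarrow> 'a" where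
  "N1 S F G T a b k x y t =
     (1 / a) *\<^sub>R blinfun_apply (S t)
        (blinfun_apply (S T) (x 0) - k *\<^sub>R blinfun_apply (S T) (y 0) + (k * b) *\<^sub>R y 0
         + integral {0..T} (\<lambda>s. blinfun_apply (S (T - s)) (F (x s, y s) - k *\<^sub>R G (x s, y s))))
     + integral {0..t} (\<lambda>s. blinfun_apply (S (t - s)) (F (x s, y s)))"

definition N2 ::
  "(real \<Rightarrow> ('a::banach \<Rightarrow>\<^sub>L 'a)) \<Rightarrow> ('a \<times> 'a \<Rightarrow> 'a) \<Rightarrow> ('a \<times> 'a \<Rightarrow> 'a) \<Rightarrow>
   real \<Rightarrow> real \<Rightarrow> real \<Rightarrow> real \<Rightarrow> (real \<Rightarrow> 'a) \<Rightarrow> (real \<Rightarrow> 'a) \<Rightarrow> real \<Rightarrow> 'a" where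
  "N2 S F G T a b k x y t =
     (1 / (k * b)) *\<^sub>R blinfun_apply (S t)
        (- blinfun_apply (S T) (x 0) + k *\<^sub>R blinfun_apply (S T) (y 0) + a *\<^sub>R x 0
         - integral {0..T} (\<lambda>s. blinfun_apply (S (T - s)) (F (x s, y s) - k *\<^sub>R G (x s, y s))))
     + integral {0..t} (\<lambda>s. blinfun_apply (S (t - s)) (G (x s, y s)))"

end

theory Submission
  imports Defs
begin

lemma ubp:
  fixes f :: "'i \<Rightarrow> ('a::banach \<Rightarrow>\<^sub>L 'b::real_normed_vector)"
  assumes pw: "\<And>z. \<exists>B. \<forall>i\<in>I. norm (blinfun_apply (f i) z) \<le> B"
  shows "\<exists>M. \<forall>i\<in>I. norm (f i) \<le> M"
proof -
  define E where "E n = {z. \<forall>i\<in>I. norm (blinfun_apply (f i) z) \<le> real n}" for n :: nat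
  have cl: "closed (E n)" for n
  proof -
    have "E n = (\<Inter>i\<in>I. {z. norm (blinfun_apply (f i) z) \<le> real n})"
      unfolding E_def by auto
    moreover have "closed {z. norm (blinfun_apply (f i) z) \<le> real n}" for i
      by (intro closed_Collect_le continuous_intros)
    ultimately show ?thesis by auto
  qed
  have un: "\<Union>(range E) = UNIV"
  proof (rule set_eqI, rule iffI)
    fix z :: 'a assume "z \<in> \<Union>(range E)" then show "z \<in> UNIV" by simp
  next
    fix z :: 'a
    assume "z \<in> UNIV"
    obtain B where "\<forall>i\<in>I. norm (blinfun_apply (f i) z) \<le> B" using pw by blast
    moreover obtain n :: nat where "B \<le> real n" using real_arch_simple by blast
    ultimately have "z \<in> E n" unfolding E_def by force
    then show "z \<in> \<Union>(range E)" by blast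
  qed
  have "\<exists>n. interior (E n) \<noteq> {}"
  proof (rule ccontr)
    assume "\<not> ?thesis"
    then have "euclidean interior_of \<Union>(range E) = {}"
      by (intro Baire_category_alt) (auto simp: completely_metrizable_space_euclidean cl)
    then show False using un by simp
  qed
  then obtain n z0 where "z0 \<in> interior (E n)" by blast
  then obtain r where r: "r > 0" "ball z0 r \<subseteq> E n"
    using mem_interior by blast
  have "norm (f i) \<le> 4 * real n / r" if i: "i \<in> I" for i
  proof (rule norm_blinfun_bound)
    show "0 \<le> 4 * real n / r" using r by simp
    fix w :: 'a
    show "norm (blinfun_apply (f i) w) \<le> 4 * real n / r * norm w"
    proof (cases "w = 0")
      case True then show ?thesis by simp
    next
      case False
      define c where "c = r / (2 * norm w)"
      have c: "c > 0" using r False by (simp add: c_def)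
      define u where "u = c *\<^sub>R w"
      have nu: "norm u = r / 2" using r False c by (simp add: u_def c_def)
      have "z0 + u \<in> E n" "z0 \<in> E n" using r nu by (auto simp: dist_norm intro!: subsetD[OF r(2)])
      then have "norm (blinfun_apply (f i) (z0 + u)) \<le> real n" "norm (blinfun_apply (f i) z0) \<le> real n"
        using i unfolding E_def by auto
      then have "norm (blinfun_apply (f i) u) \<le> 2 * real n"
        using norm_triangle_ineq4[of "blinfun_apply (f i) (z0 + u)" "blinfun_apply (f i) z0"]
        by (simp add: blinfun.add_right)
      then have "c * norm (blinfun_apply (f i) w) \<le> 2 * real n"
        using c by (simp add: u_def blinfun.scaleR_right)
      then have "norm (blinfun_apply (f i) w) \<le> 2 * real n / c"
        using c by (simp add: field_simps)
      also have "2 * real n / c = 4 * real n / r * norm w"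
        using r False by (simp add: c_def field_simps)
      finally show ?thesis .
    qed
  qed
  then show ?thesis by blast
qed

lemma sg_local_bound:
  fixes S :: "real \<Rightarrow> ('a::banach \<Rightarrow>\<^sub>L 'a)"
  assumes "C0_semigroup S"
  shows "\<exists>\<delta>>0. \<exists>M. \<forall>t\<in>{0..\<delta>}. norm (S t) \<le> M"
proof (rule ccontr)
  assume neg: "\<not> ?thesis"
  have S0: "S 0 = id_blinfun" and lim: "\<And>z. ((\<lambda>t. blinfun_apply (S t) z) \<longlongrightarrow> z) (at_right 0)"
    using assms unfolding C0_semigroup_def by auto
  have "\<exists>t\<in>{0..1/(real n+1)}. norm (S t) > real n" for n :: nat
  proof -
    have "1/(real n+1) > 0" by simp
    then show ?thesis using neg by (meson not_le)
  qed
  then obtain tn where tn: "\<And>n. tn n \<in> {0..1/(real n+1)}" "\<And>n. norm (S (tn n)) > real n"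
    by metis
  have tn0: "tn \<longlonglongrightarrow> 0"
  proof (rule tendsto_sandwich[of "\<lambda>_. 0" _ _ "\<lambda>n. 1/(real n+1)"])
    show "\<forall>\<^sub>F n in sequentially. 0 \<le> tn n" using tn(1) by simp
    show "\<forall>\<^sub>F n in sequentially. tn n \<le> 1/(real n+1)" using tn(1) by simp
    show "(\<lambda>n. 1/(real n+1)) \<longlonglongrightarrow> 0" using LIMSEQ_inverse_real_of_nat by (simp add: inverse_eq_divide add.commute)
  qed simp
  have pos: "tn n > 0" if "n \<ge> 1" for n
  proof -
    have "norm (S 0) \<le> 1" using S0 by (simp add: norm_blinfun_id_le)
    moreover have "tn n \<ge> 0" using tn(1)[of n] by simp
    moreover have "norm (S (tn n)) > 1" using tn(2)[of n] that by linarith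
    ultimately show ?thesis by (cases "tn n = 0") auto
  qed
  have tnr: "filterlim tn (at_right 0) sequentially"
    unfolding filterlim_at
  proof
    show "\<forall>\<^sub>F n in sequentially. tn n \<in> {0<..} \<and> tn n \<noteq> 0"
      unfolding eventually_sequentially
    proof (intro exI[of _ 1] allI impI)
      fix n :: nat assume "1 \<le> n" then have "tn n > 0" by (rule pos)
      then show "tn n \<in> {0<..} \<and> tn n \<noteq> 0" by simp
    qed
  qed (rule tn0)
  have "\<exists>B. \<forall>n\<in>UNIV. norm (blinfun_apply (S (tn n)) z) \<le> B" for z
  proof -
    have "(\<lambda>n. blinfun_apply (S (tn n)) z) \<longlonglongrightarrow> z"
      using filterlim_compose[OF lim tnr] .
    then have "Bseq (\<lambda>n. blinfun_apply (S (tn n)) z)" using convergent_imp_Bseq convergentI by blast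
    then show ?thesis unfolding Bseq_def by blast
  qed
  then obtain M where M: "\<forall>n\<in>UNIV. norm (S (tn n)) \<le> M"
    using ubp[of UNIV "\<lambda>n. S (tn n)"] by blast
  obtain n :: nat where "M \<le> real n" using real_arch_simple by blast
  moreover have "norm (S (tn n)) \<le> M" using M by simp
  ultimately show False using tn(2)[of n] by linarith
qed

lemma sg_bound:
  fixes S :: "real \<Rightarrow> ('a::banach \<Rightarrow>\<^sub>L 'a)"
  assumes "C0_semigroup S"
  shows "\<exists>M. \<forall>t\<in>{0..L}. norm (S t) \<le> M"
proof -
  have S0: "S 0 = id_blinfun" and sg: "\<And>t s. t \<ge> 0 \<Longrightarrow> s \<ge> 0 \<Longrightarrow> S (t + s) = S t o\<^sub>L S s"
    using assms unfolding C0_semigroup_def by auto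
  obtain \<delta> M where d: "\<delta> > 0" and M: "\<forall>t\<in>{0..\<delta>}. norm (S t) \<le> M"
    using sg_local_bound[OF assms] by blast
  define K where "K = max 1 M"
  have K1: "K \<ge> 1" and KM: "M \<le> K" by (auto simp: K_def)
  have "\<forall>t\<in>{0..real n * \<delta>}. norm (S t) \<le> K ^ (n+1)" for n
  proof (induction n)
    case 0
    then show ?case using S0 K1 by (simp add: norm_blinfun_id_le order_trans[OF norm_blinfun_id_le])
  next
    case (Suc n)
    show ?case
    proof
      fix t assume t: "t \<in> {0..real (Suc n) * \<delta>}"
      show "norm (S t) \<le> K ^ (Suc n + 1)"
      proof (cases "t \<le> \<delta>")
        case True
        then have "t \<in> {0..\<delta>}" using t by simp
        then have "norm (S t) \<le> K" using M KM by (meson order_trans)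
        also have "\<dots> \<le> K ^ (Suc n + 1)" using power_increasing[of 1 "Suc n + 1" K] K1 by simp
        finally show ?thesis .
      next
        case False
        have "real n * \<delta> \<ge> 0" using d by simp
        have t1: "t - \<delta> \<in> {0..real n * \<delta>}" using t False by (auto simp: distrib_right)
        have "S t = S \<delta> o\<^sub>L S (t - \<delta>)" using sg[of \<delta> "t - \<delta>"] t1 d by auto
        then have "norm (S t) \<le> norm (S \<delta>) * norm (S (t - \<delta>))"
          by (simp add: norm_blinfun_compose)
        also have "\<dots> \<le> K * K ^ (n+1)"
          using M d KM Suc t1 K1 by (intro mult_mono) (auto intro: order_trans)
        finally show ?thesis by simp
      qed
    qed
  qed
  moreover obtain n :: nat where "L / \<delta> \<le> real n" using real_arch_simple by blast
  then have "L \<le> real n * \<delta>" using d by (simp add: field_simps)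
  ultimately have "\<forall>t\<in>{0..L}. norm (S t) \<le> K ^ (n+1)" by (meson atLeastAtMost_iff order_trans)
  then show ?thesis by blast
qed

lemma sg_strong_cont:
  fixes S :: "real \<Rightarrow> ('a::banach \<Rightarrow>\<^sub>L 'a)"
  assumes C0: "C0_semigroup S"
  shows "continuous_on {0..} (\<lambda>t. blinfun_apply (S t) z)"
  unfolding continuous_on_iff
proof (intro ballI allI impI)
  fix t0 :: real and e :: real
  assume t0: "t0 \<in> {0..}" and e: "e > 0"
  have sg: "\<And>t s. t \<ge> 0 \<Longrightarrow> s \<ge> 0 \<Longrightarrow> S (t + s) = S t o\<^sub>L S s"
    and lim: "((\<lambda>t. blinfun_apply (S t) z) \<longlongrightarrow> z) (at_right 0)"
    using C0 unfolding C0_semigroup_def by auto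
  obtain M0 where M0: "\<forall>t\<in>{0..t0+1}. norm (S t) \<le> M0" using sg_bound[OF C0] by blast
  define M where "M = max 1 M0"
  have M: "\<forall>t\<in>{0..t0+1}. norm (S t) \<le> M" and Mpos: "M > 0"
    using M0 by (auto simp: M_def intro: order_trans)
  have "\<forall>\<^sub>F h in at_right 0. dist (blinfun_apply (S h) z) z < e / M"
    using lim e Mpos by (simp add: tendsto_iff)
  then obtain \<eta> where eta: "\<eta> > 0" "\<And>h. h > 0 \<Longrightarrow> h < \<eta> \<Longrightarrow> dist (blinfun_apply (S h) z) z < e / M"
    unfolding eventually_at_right_field by auto
  have key: "norm (blinfun_apply (S s) (blinfun_apply (S h) z - z)) < e"
    if s: "s \<in> {0..t0+1}" and h: "0 \<le> h" "h < \<eta>" for s h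
  proof (cases "h = 0")
    case True
    have "S 0 = id_blinfun" using C0 unfolding C0_semigroup_def by auto
    then show ?thesis using True e by simp
  next
    case False
    then have "norm (blinfun_apply (S h) z - z) < e / M" using eta(2)[of h] h by (simp add: dist_norm)
    then have "M * norm (blinfun_apply (S h) z - z) < e" using Mpos by (simp add: field_simps)
    moreover have "norm (blinfun_apply (S s) (blinfun_apply (S h) z - z)) \<le> M * norm (blinfun_apply (S h) z - z)"
      using order_trans[OF norm_blinfun mult_right_mono[OF _ norm_ge_zero]] M s by blast
    ultimately show ?thesis by linarith
  qed
  show "\<exists>d>0. \<forall>t\<in>{0..}. dist t t0 < d \<longrightarrow> dist (blinfun_apply (S t) z) (blinfun_apply (S t0) z) < e"
  proof (intro exI[of _ "min \<eta> 1"] conjI ballI impI)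
    show "min \<eta> 1 > 0" using eta by simp
    fix t :: real assume t: "t \<in> {0..}" and d: "dist t t0 < min \<eta> 1"
    show "dist (blinfun_apply (S t) z) (blinfun_apply (S t0) z) < e"
    proof (cases "t0 \<le> t")
      case True
      have "S t = S t0 o\<^sub>L S (t - t0)" using sg[of t0 "t - t0"] t0 True by simp
      then have "blinfun_apply (S t) z - blinfun_apply (S t0) z = blinfun_apply (S t0) (blinfun_apply (S (t - t0)) z - z)"
        by (simp add: blinfun.diff_right)
      moreover have "norm (blinfun_apply (S t0) (blinfun_apply (S (t - t0)) z - z)) < e"
        using key[of t0 "t - t0"] t0 True d by (simp add: dist_real_def)
      ultimately show ?thesis by (simp add: dist_norm)
    next
      case False
      have "S t0 = S t o\<^sub>L S (t0 - t)" using sg[of t "t0 - t"] t False by simp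
      then have "blinfun_apply (S t0) z - blinfun_apply (S t) z = blinfun_apply (S t) (blinfun_apply (S (t0 - t)) z - z)"
        by (simp add: blinfun.diff_right)
      moreover have "norm (blinfun_apply (S t) (blinfun_apply (S (t0 - t)) z - z)) < e"
        using key[of t "t0 - t"] t False d by (simp add: dist_real_def)
      ultimately show ?thesis by (metis dist_norm dist_commute)
    qed
  qed
qed

lemma cont_apply_family:
  fixes U :: "real \<Rightarrow> ('a::real_normed_vector \<Rightarrow>\<^sub>L 'b::real_normed_vector)"
  assumes Uc: "\<And>z. continuous_on K (\<lambda>s. blinfun_apply (U s) z)"
    and UM: "\<forall>s\<in>K. norm (U s) \<le> M0"
    and wc: "continuous_on K w"
  shows "continuous_on K (\<lambda>s. blinfun_apply (U s) (w s))"
  unfolding continuous_on_iff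
proof (intro ballI allI impI)
  fix s0 e assume s0: "s0 \<in> K" and e: "(e::real) > 0"
  define M where "M = max 1 M0"
  have M: "\<forall>s\<in>K. norm (U s) \<le> M" and Mpos: "M > 0"
    using UM by (auto simp: M_def intro: order_trans)
  obtain d1 where d1: "d1 > 0" "\<forall>s\<in>K. dist s s0 < d1 \<longrightarrow> dist (w s) (w s0) < e / 2 / M"
  proof -
    have "e / 2 / M > 0" using e Mpos by simp
    then show ?thesis using wc s0 that unfolding continuous_on_iff by blast
  qed
  obtain d2 where d2: "d2 > 0" "\<forall>s\<in>K. dist s s0 < d2 \<longrightarrow> dist (blinfun_apply (U s) (w s0)) (blinfun_apply (U s0) (w s0)) < e / 2"
  proof -
    have "e / 2 > 0" using e by simp
    then show ?thesis using Uc[of "w s0"] s0 that unfolding continuous_on_iff by blast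
  qed
  show "\<exists>d>0. \<forall>s\<in>K. dist s s0 < d \<longrightarrow> dist (blinfun_apply (U s) (w s)) (blinfun_apply (U s0) (w s0)) < e"
  proof (intro exI[of _ "min d1 d2"] conjI ballI impI)
    show "min d1 d2 > 0" using d1 d2 by simp
    fix s assume s: "s \<in> K" and d: "dist s s0 < min d1 d2"
    have a: "norm (w s - w s0) < e / 2 / M" using d1 s d by (simp add: dist_norm)
    have "norm (blinfun_apply (U s) (w s - w s0)) \<le> M * norm (w s - w s0)"
      using order_trans[OF norm_blinfun mult_right_mono[OF _ norm_ge_zero]] M s by blast
    also have "\<dots> < e / 2" using a Mpos by (simp add: field_simps)
    finally have 1: "norm (blinfun_apply (U s) (w s - w s0)) < e / 2" .
    have 2: "norm (blinfun_apply (U s) (w s0) - blinfun_apply (U s0) (w s0)) < e / 2"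
      using d2 s d by (simp add: dist_norm)
    have "blinfun_apply (U s) (w s) - blinfun_apply (U s0) (w s0)
      = blinfun_apply (U s) (w s - w s0) + (blinfun_apply (U s) (w s0) - blinfun_apply (U s0) (w s0))"
      by (simp add: blinfun.diff_right)
    then have "norm (blinfun_apply (U s) (w s) - blinfun_apply (U s0) (w s0)) \<le> norm (blinfun_apply (U s) (w s - w s0)) + norm (blinfun_apply (U s) (w s0) - blinfun_apply (U s0) (w s0))"
      by (metis norm_triangle_ineq)
    then have "norm (blinfun_apply (U s) (w s) - blinfun_apply (U s0) (w s0)) < e"
      using 1 2 by linarith
    then show "dist (blinfun_apply (U s) (w s)) (blinfun_apply (U s0) (w s0)) < e" by (simp add: dist_norm)
  qed
qed

lemma sg_integrable:
  fixes S :: "real \<Rightarrow> ('a::banach \<Rightarrow>\<^sub>L 'a)"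
  assumes C0: "C0_semigroup S" and wc: "continuous_on {0..t} w"
  shows "(\<lambda>s. blinfun_apply (S (t - s)) (w s)) integrable_on {0..t}"
proof -
  obtain M where M: "\<forall>r\<in>{0..t}. norm (S r) \<le> M" using sg_bound[OF C0] by blast
  have "continuous_on {0..t} (\<lambda>s. blinfun_apply (S (t - s)) (w s))"
  proof (rule cont_apply_family[OF _ _ wc])
    fix z
    show "continuous_on {0..t} (\<lambda>s. blinfun_apply (S (t - s)) z)"
      by (rule continuous_on_compose2[OF sg_strong_cont[OF C0]]) (auto intro!: continuous_intros)
    show "\<forall>s\<in>{0..t}. norm (S (t - s)) \<le> M" using M by auto
  qed
  then show ?thesis by (rule integrable_continuous_interval)
qed

theorem mainTheorem1:
  fixes S :: "real \<Rightarrow> ('a::banach \<Rightarrow>\<^sub>L 'a)"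
    and A :: "'a \<Rightarrow> 'a" and D :: "'a set"
    and F G :: "'a \<times> 'a \<Rightarrow> 'a"
    and T a b k :: real
    and x y :: "real \<Rightarrow> 'a"
  assumes "T > 0"
    and "C0_semigroup S"
    and "sg_generator S A D"
    and "a > 0" and "b > 0" and "k > 0"
    and "continuous_on UNIV F" and "continuous_on UNIV G"
    and "continuous_on {0..T} x" and "continuous_on {0..T} y"
    and "\<forall>t\<in>{0..T}. x t = N1 S F G T a b k x y t"
    and "\<forall>t\<in>{0..T}. y t = N2 S F G T a b k x y t"
  shows "(\<forall>t\<in>{0..T}.
            x t = blinfun_apply (S t) (x 0) + integral {0..t} (\<lambda>s. blinfun_apply (S (t - s)) (F (x s, y s))) \<and>
            y t = blinfun_apply (S t) (y 0) + integral {0..t} (\<lambda>s. blinfun_apply (S (t - s)) (G (x s, y s))))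
         \<and> x T - a *\<^sub>R x 0 = k *\<^sub>R (y T - b *\<^sub>R y 0)"
proof -
  note T = assms(1) and C0 = assms(2) and ab = assms(4,5,6)
  have S0: "S 0 = id_blinfun" using C0 unfolding C0_semigroup_def by auto
  define I where "I = integral {0..T} (\<lambda>s. blinfun_apply (S (T - s)) (F (x s, y s) - k *\<^sub>R G (x s, y s)))"
  define JF where "JF t = integral {0..t} (\<lambda>s. blinfun_apply (S (t - s)) (F (x s, y s)))" for t
  define JG where "JG t = integral {0..t} (\<lambda>s. blinfun_apply (S (t - s)) (G (x s, y s)))" for t
  define u where "u = blinfun_apply (S T) (x 0) - k *\<^sub>R blinfun_apply (S T) (y 0) + (k * b) *\<^sub>R y 0 + I"
  define v where "v = - blinfun_apply (S T) (x 0) + k *\<^sub>R blinfun_apply (S T) (y 0) + a *\<^sub>R x 0 - I"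
  have xe: "x t = (1 / a) *\<^sub>R blinfun_apply (S t) u + JF t" if "t \<in> {0..T}" for t
  proof -
    have "x t = N1 S F G T a b k x y t" using assms(11) that by blast
    then show ?thesis unfolding N1_def u_def I_def JF_def .
  qed
  have ye: "y t = (1 / (k * b)) *\<^sub>R blinfun_apply (S t) v + JG t" if "t \<in> {0..T}" for t
  proof -
    have "y t = N2 S F G T a b k x y t" using assms(12) that by blast
    then show ?thesis unfolding N2_def v_def I_def JG_def .
  qed
  have T0: "0 \<in> {0..T}" "T \<in> {0..T}" using T by auto
  have JF0: "JF 0 = 0" "JG 0 = 0" unfolding JF_def JG_def by simp_all
  have x0: "x 0 = (1 / a) *\<^sub>R u" using xe[OF T0(1)] S0 JF0 by simp
  have y0: "y 0 = (1 / (k * b)) *\<^sub>R v" using ye[OF T0(1)] S0 JF0 by simp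
  have part1: "x t = blinfun_apply (S t) (x 0) + JF t \<and> y t = blinfun_apply (S t) (y 0) + JG t"
    if t: "t \<in> {0..T}" for t
    using xe[OF t] ye[OF t] x0 y0 by (simp add: blinfun.scaleR_right)
  have cx: "continuous_on {0..T} (\<lambda>s. (x s, y s))"
    using assms(9,10) by (intro continuous_on_Pair)
  have cF: "continuous_on {0..T} (\<lambda>s. F (x s, y s))"
    by (rule continuous_on_compose2[OF assms(7) cx]) auto
  have cG: "continuous_on {0..T} (\<lambda>s. G (x s, y s))"
    by (rule continuous_on_compose2[OF assms(8) cx]) auto
  have iF: "(\<lambda>s. blinfun_apply (S (T - s)) (F (x s, y s))) integrable_on {0..T}"
    by (rule sg_integrable[OF C0 cF])
  have iG: "(\<lambda>s. blinfun_apply (S (T - s)) (G (x s, y s))) integrable_on {0..T}"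
    by (rule sg_integrable[OF C0 cG])
  have "I = integral {0..T} (\<lambda>s. blinfun_apply (S (T - s)) (F (x s, y s)) - k *\<^sub>R blinfun_apply (S (T - s)) (G (x s, y s)))"
    unfolding I_def by (simp add: blinfun.diff_right blinfun.scaleR_right)
  also have "\<dots> = JF T - k *\<^sub>R JG T"
    unfolding JF_def JG_def using iF iG by (simp add: integral_diff integrable_cmul)
  finally have Ieq: "I = JF T - k *\<^sub>R JG T" .
  have au: "a *\<^sub>R x 0 = u" using x0 ab by simp
  have "x T - a *\<^sub>R x 0 = k *\<^sub>R (y T - b *\<^sub>R y 0)"
  proof -
    have xT: "x T = blinfun_apply (S T) (x 0) + JF T" and yT: "y T = blinfun_apply (S T) (y 0) + JG T"
      using part1[OF T0(2)] by auto
    have "x T - a *\<^sub>R x 0 = blinfun_apply (S T) (x 0) + JF T - u" unfolding xT au ..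
    also have "\<dots> = k *\<^sub>R blinfun_apply (S T) (y 0) - (k * b) *\<^sub>R y 0 + k *\<^sub>R JG T"
      unfolding u_def Ieq by (simp add: algebra_simps)
    also have "\<dots> = k *\<^sub>R (y T - b *\<^sub>R y 0)"
      unfolding yT by (simp add: algebra_simps)
    finally show ?thesis .
  qed
  then show ?thesis using part1 unfolding JF_def JG_def by blast
qed

end
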